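(* Let $U:\mathbb R^m_{++}\to\mathbb R$ be concave and let $s^{opt}$ be a maximizer of $U$ over $B_s$. Let $w'\in W$ have weighted center $(x',y',s')$ and let $g'$ be a supergradient of $U$ at $s'$. Put $g'_w:=(Y')^{-1}g'$. Then $$(g'_w)^{\top}\bigl(S^{opt}y'-w'\bigr)\ \ge\ 0,$$ i.e. $S^{opt}y'$ lies in the half-space $\{w:(g'_w)^\top(w-w')\ge 0\}$.
   Context: Let $A\in\mathbb R^{m\times n}$ have full column rank $n\le m$ and $b\in\mathbb R^m$ be such that $\{x\in\mathbb R^n:Ax\le b\}$ is bounded with nonempty interior. For $w\in\mathbb R^m_{++}$ the weighted center of $w$ is the unique $(x,y,s)\in\mathbb R^n\times\mathbb R^m\times\mathbb R^m$ with $Ax+s=b$, $s>0$, $A^\top y=0$, $\mathrm{Diag}(s)y=w$; we call $s$ and $y$ its $s$-vector and $y$-vector. Capital letters denote diagonal matrices of the corresponding vectors ($Y=\mathrm{Diag}(y)$, $S^{opt}=\mathrm{Diag}(s^{opt})$, etc.). $W=\{w\in\mathbb R^m:w>0,\ e^\top w=1\}$ ($e$ the all-ones vector). A vector is a centric $s$-vector (resp. $y$-vector) if it is the $s$-vector (resp. $y$-vector) of the weighted center of some $w\in W$; $B_s$ is the set of centric $s$-vectors. A supergradient of a concave $U$ at $s^0$ is a vector $g$ with $U(s)\le U(s^0)+g^\top(s-s^0)$ for all $s$ in the domain. *)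

theory Defs
  imports "HOL-Analysis.Analysis"
begin

definition weighted_center ::
  "real^'n^'m \<Rightarrow> real^'m \<Rightarrow> real^'m \<Rightarrow> real^'n \<Rightarrow> real^'m \<Rightarrow> real^'m \<Rightarrow> bool" where
  "weighted_center A b w x y s \<longleftrightarrow>
     A *v x + s = b \<and> (\<forall>i. s $ i > 0) \<and> transpose A *v y = 0 \<and> (\<forall>i. s $ i * y $ i = w $ i)"

definition weight_simplex :: "(real^'m) set" where
  "weight_simplex = {w. (\<forall>i. w $ i > 0) \<and> (\<Sum>i\<in>UNIV. w $ i) = 1}"

definition centric_s_vectors :: "real^'n^'m \<Rightarrow> real^'m \<Rightarrow> (real^'m) set" where
  "centric_s_vectors A b = {s. \<exists>w\<in>weight_simplex. \<exists>x y. weighted_center A b w x y s}"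

definition pos_orthant :: "(real^'m) set" where
  "pos_orthant = {s. \<forall>i. s $ i > 0}"

definition supergradient :: "(real^'m \<Rightarrow> real) \<Rightarrow> (real^'m) set \<Rightarrow> real^'m \<Rightarrow> real^'m \<Rightarrow> bool" where
  "supergradient U D s0 g \<longleftrightarrow> (\<forall>s\<in>D. U s \<le> U s0 + g \<bullet> (s - s0))"

end

theory Submission
  imports Defs
begin

theorem lemma3p2:
  fixes A :: "real^'n^'m" and b :: "real^'m" and U :: "real^'m \<Rightarrow> real"
    and sopt w' y' s' g' :: "real^'m" and x' :: "real^'n"
  assumes rankA: "rank A = CARD('n)"
    and nm: "CARD('n) \<le> CARD('m)"
    and bdd: "bounded {x. \<forall>i. (A *v x) $ i \<le> b $ i}"
    and int: "interior {x. \<forall>i. (A *v x) $ i \<le> b $ i} \<noteq> {}"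
    and conc: "concave_on pos_orthant U"
    and sopt_in: "sopt \<in> centric_s_vectors A b"
    and sopt_max: "\<forall>s\<in>centric_s_vectors A b. U s \<le> U sopt"
    and w'W: "w' \<in> weight_simplex"
    and wc: "weighted_center A b w' x' y' s'"
    and sg: "supergradient U pos_orthant s' g'"
  shows "(\<chi> i. g' $ i / y' $ i) \<bullet> ((\<chi> i. sopt $ i * y' $ i) - w') \<ge> 0"
proof -
  have s'pos: "\<forall>i. s' $ i > 0" and sy: "\<forall>i. s' $ i * y' $ i = w' $ i"
    using wc unfolding weighted_center_def by auto
  have wpos: "\<forall>i. w' $ i > 0" using w'W unfolding weight_simplex_def by auto
  have ypos: "y' $ i \<noteq> 0" for i
    using s'pos sy wpos by (metis less_irrefl mult_zero_right)
  have s'in: "s' \<in> centric_s_vectors A b"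
    using w'W wc unfolding centric_s_vectors_def by blast
  have soptpos: "sopt \<in> pos_orthant"
    using sopt_in unfolding centric_s_vectors_def weighted_center_def pos_orthant_def by auto
  have "U sopt \<le> U s' + g' \<bullet> (sopt - s')"
    using sg soptpos unfolding supergradient_def by auto
  moreover have "U s' \<le> U sopt" using sopt_max s'in by auto
  ultimately have ge: "g' \<bullet> (sopt - s') \<ge> 0" by linarith
  have "(\<chi> i. g' $ i / y' $ i) \<bullet> ((\<chi> i. sopt $ i * y' $ i) - w') = g' \<bullet> (sopt - s')"
    unfolding inner_vec_def
  proof (rule sum.cong[OF refl])
    fix i
    have "w' $ i = s' $ i * y' $ i" using sy by simp
    then show "(\<chi> i. g' $ i / y' $ i) $ i \<bullet> ((\<chi> i. sopt $ i * y' $ i) - w') $ i = g' $ i \<bullet> (sopt - s') $ i"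
      using ypos[of i] by (simp add: field_simps)
  qed
  then show ?thesis using ge by simp
qed

end
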